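(* There exists a ride sharing game (as defined in the context) that does not have the finite improvement property.
   Context: A ride sharing game consists of: a finite set of players $\mathcal{N}=\{1,\ldots,N\}$; a finite set of vehicles $\mathcal{M}=\{1,\ldots,M\}$, each with a common seating capacity $w\in\mathbb{N}_{>0}$; a finite set of times $\mathcal{T}=\{1,\ldots,T\}$; a directed simple graph $\mathcal{G}=(\mathcal{V},\mathcal{E})$ in which, in addition, every node has a loop to itself. $\mathcal{R}$ is the set of all paths $r=(v_1,e_1,v_2,\ldots,e_{T-1},v_T)$ of length $T-1$ in $\mathcal{G}$ (a round trip; edge $e_t$ is traversed during period $(t,t+1)$). Each player $i$ has a strategy set $\mathcal{A}_i\subset\mathcal{R}$; $\mathcal{A}=\times_i\mathcal{A}_i$ is the set of strategy profiles $\vec a$. An allocation map $\mu(i,t,\vec a)\in\mathcal{M}\cup\{\emptyset\}$ assigns player $i$ to a vehicle (or none) during period $(t,t+1)$; a vehicle moves along the edge of the players allocated to it, and $s_m(t,\vec a)$ is the number of players riding vehicle $m$ during $(t,t+1)$. Each edge $e$ has a cost function $c_e(w,s)\ge 0$, $s\in\mathbb{N}_{\ge0}$, which is monotone decreasing in $s$ for $s<w$ and monotone increasing for $s\ge w$. The cost of player $i$ is $c_i(\vec a)=\sum_{e_t\in a_i}c_e(w,s_{\mu(i,t,\vec a)}(t,\vec a))$. Players choose whole round trips simultaneously (one-shot game). A pure Nash equilibrium is a profile from which no player can reduce his cost by unilaterally changing his strategy. A game has the finite improvement property (FIP) if, starting from any strategy profile, letting players update their strategies one at a time always reaches a pure Nash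 equilibrium after finitely many updates. *)

theory Defs
  imports Complex_Main
begin

text \<open>A round trip (element of R): a list of T vertices v_1 ... v_T (list index k
  holds v_(k+1)) such that consecutive vertices are joined by an edge.\<close>
definition is_route :: "nat \<Rightarrow> 'v set \<Rightarrow> ('v \<times> 'v) set \<Rightarrow> 'v list \<Rightarrow> bool" where
  "is_route T V E r \<longleftrightarrow> length r = T \<and> set r \<subseteq> V \<and>
     (\<forall>t\<in>{1..<T}. (r ! (t - 1), r ! t) \<in> E)"

definition edge_at :: "'v list \<Rightarrow> nat \<Rightarrow> 'v \<times> 'v" where
  "edge_at r t = (r ! (t - 1), r ! t)"

definition profiles :: "nat \<Rightarrow> (nat \<Rightarrow> 'v list set) \<Rightarrow> 'v list list set" where
  "profiles N A = {a. length a = N \<and> (\<forall>i<N. a ! i \<in> A i)}"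

definition load :: "nat \<Rightarrow> (nat \<Rightarrow> nat \<Rightarrow> 'v list list \<Rightarrow> nat option)
    \<Rightarrow> nat \<Rightarrow> nat \<Rightarrow> 'v list list \<Rightarrow> nat" where
  "load N \<mu> m t a = card {j. j < N \<and> \<mu> j t a = Some m}"

definition ride_load :: "nat \<Rightarrow> (nat \<Rightarrow> nat \<Rightarrow> 'v list list \<Rightarrow> nat option)
    \<Rightarrow> nat \<Rightarrow> 'v list list \<Rightarrow> nat option \<Rightarrow> nat" where
  "ride_load N \<mu> t a opt = (case opt of None \<Rightarrow> 0 | Some m \<Rightarrow> load N \<mu> m t a)"

definition player_cost :: "nat \<Rightarrow> nat \<Rightarrow> nat \<Rightarrow> (nat \<Rightarrow> nat \<Rightarrow> 'v list list \<Rightarrow> nat option)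
    \<Rightarrow> ('v \<times> 'v \<Rightarrow> nat \<Rightarrow> nat \<Rightarrow> real) \<Rightarrow> nat \<Rightarrow> 'v list list \<Rightarrow> real" where
  "player_cost N w T \<mu> c i a =
     (\<Sum>t\<in>{1..<T}. c (edge_at (a ! i) t) w (ride_load N \<mu> t a (\<mu> i t a)))"

definition ride_sharing_game :: "nat \<Rightarrow> nat \<Rightarrow> nat \<Rightarrow> nat \<Rightarrow> 'v set \<Rightarrow> ('v \<times> 'v) set
    \<Rightarrow> (nat \<Rightarrow> 'v list set) \<Rightarrow> (nat \<Rightarrow> nat \<Rightarrow> 'v list list \<Rightarrow> nat option)
    \<Rightarrow> ('v \<times> 'v \<Rightarrow> nat \<Rightarrow> nat \<Rightarrow> real) \<Rightarrow> bool" where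
  "ride_sharing_game N M w T V E A \<mu> c \<longleftrightarrow>
     finite V \<and> E \<subseteq> V \<times> V \<and> (\<forall>v\<in>V. (v, v) \<in> E) \<and>
     w > 0 \<and> T \<ge> 1 \<and>
     (\<forall>i<N. A i \<subseteq> {r. is_route T V E r}) \<and>
     (\<forall>a\<in>profiles N A. \<forall>i<N. \<forall>t\<in>{1..<T}. \<mu> i t a \<in> insert None (Some ` {..<M})) \<and>
     (\<forall>a\<in>profiles N A. \<forall>i<N. \<forall>j<N. \<forall>t\<in>{1..<T}.
        \<mu> i t a \<noteq> None \<and> \<mu> i t a = \<mu> j t a \<longrightarrow> edge_at (a ! i) t = edge_at (a ! j) t) \<and>
     (\<forall>e\<in>E. \<forall>s. c e w s \<ge> 0) \<and>
     (\<forall>e\<in>E. \<forall>s. s + 1 < w \<longrightarrow> c e w (s + 1) \<le> c e w s) \<and>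
     (\<forall>e\<in>E. \<forall>s. w \<le> s \<longrightarrow> c e w s \<le> c e w (s + 1))"

definition improvement_step where
  "improvement_step N w T A \<mu> c a b \<longleftrightarrow> a \<in> profiles N A \<and>
     (\<exists>i<N. \<exists>x\<in>A i. b = a[i := x] \<and> player_cost N w T \<mu> c i b < player_cost N w T \<mu> c i a)"

text \<open>FIP: there is no infinite sequence of improvement steps (the strategy space is
  finite, so every maximal improvement path then ends in a pure Nash equilibrium).\<close>
definition has_FIP where
  "has_FIP N w T A \<mu> c \<longleftrightarrow>
     \<not> (\<exists>f :: nat \<Rightarrow> 'v list list. \<forall>k. improvement_step N w T A \<mu> c (f k) (f (Suc k)))"

end

theory Submission
  imports Defs
begin

definition mu0 :: "nat \<Rightarrow> nat \<Rightarrow> nat list list \<Rightarrow> nat option" where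
  "mu0 i t a = (if i = 0 then (if a!0 = a!1 then Some 0 else None)
                else (if a!0 \<noteq> a!1 then Some 1 else None))"

definition c0 :: "nat \<times> nat \<Rightarrow> nat \<Rightarrow> nat \<Rightarrow> real" where
  "c0 e w s = (if s = 1 then 0 else 1)"

definition A0 :: "nat \<Rightarrow> nat list set" where "A0 i = {[0,0],[0,1]}"

definition E0 :: "(nat \<times> nat) set" where "E0 = {(0,0),(1,1),(0,1)}"

lemma load0: "load 2 mu0 0 t a = (if a!0 = a!1 then 1 else 0)"
proof -
  have "{j. j < 2 \<and> mu0 j t a = Some 0} = (if a!0 = a!1 then {0} else {})"
    by (auto simp: mu0_def less_Suc_eq)
  then show ?thesis by (simp add: load_def)
qed

lemma load1: "load 2 mu0 (Suc 0) t a = (if a!0 \<noteq> a!1 then 1 else 0)"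
proof -
  have "{j. j < 2 \<and> mu0 j t a = Some (Suc 0)} = (if a!0 \<noteq> a!1 then {1} else {})"
    by (auto simp: mu0_def less_Suc_eq)
  then show ?thesis by (simp add: load_def)
qed


lemma I12: "{1..<2::nat} = {1}" by auto

lemma cost0: "player_cost 2 2 2 mu0 c0 0 a = (if a!0 = a!Suc 0 then 0 else 1)"
proof -
  have "player_cost 2 2 2 mu0 c0 0 a = c0 (edge_at (a ! 0) 1) 2 (ride_load 2 mu0 1 a (mu0 0 1 a))"
    unfolding player_cost_def I12 by simp
  also have "\<dots> = (if a!0 = a!Suc 0 then 0 else 1)"
    by (simp add: ride_load_def c0_def load0 mu0_def[of 0])
  finally show ?thesis .
qed

lemma cost1: "player_cost 2 2 2 mu0 c0 (Suc 0) a = (if a!0 \<noteq> a!Suc 0 then 0 else 1)"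
proof -
  have "player_cost 2 2 2 mu0 c0 (Suc 0) a = c0 (edge_at (a ! Suc 0) 1) 2 (ride_load 2 mu0 1 a (mu0 (Suc 0) 1 a))"
    unfolding player_cost_def I12 by simp
  also have "\<dots> = (if a!0 \<noteq> a!Suc 0 then 0 else 1)"
    by (simp add: ride_load_def c0_def load1 mu0_def[of "Suc 0"])
  finally show ?thesis .
qed

definition H :: "nat list" where "H = [0,0]"
definition Tr :: "nat list" where "Tr = [0,1]"

lemma HT: "H \<noteq> Tr" by (simp add: H_def Tr_def)
lemma A0': "A0 i = {H,Tr}" by (simp add: A0_def H_def Tr_def)

lemma prof: "x \<in> {H,Tr} \<Longrightarrow> y \<in> {H,Tr} \<Longrightarrow> [x,y] \<in> profiles 2 A0"
  by (auto simp: profiles_def A0' less_Suc_eq numeral_2_eq_2)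

lemma st: assumes "x \<in> {H,Tr}" "y \<in> {H,Tr}" "i < 2" "z \<in> {H,Tr}"
  "player_cost 2 2 2 mu0 c0 i ([x,y][i:=z]) < player_cost 2 2 2 mu0 c0 i [x,y]"
  shows "improvement_step 2 2 2 A0 mu0 c0 [x,y] ([x,y][i:=z])"
  unfolding improvement_step_def using assms prof[OF assms(1,2)] A0'[of i] by blast

lemma s1: "improvement_step 2 2 2 A0 mu0 c0 [H,H] [H,Tr]"
  using st[of H H "Suc 0" Tr] by (simp add: cost1 HT)
lemma s2: "improvement_step 2 2 2 A0 mu0 c0 [H,Tr] [Tr,Tr]"
  using st[of H Tr 0 Tr] by (simp add: cost0 HT)
lemma s3: "improvement_step 2 2 2 A0 mu0 c0 [Tr,Tr] [Tr,H]"
  using st[of Tr Tr "Suc 0" H] HT by (simp add: cost1)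
lemma s4: "improvement_step 2 2 2 A0 mu0 c0 [Tr,H] [H,H]"
  using st[of Tr H 0 H] HT by (simp add: cost0)

definition f0 :: "nat \<Rightarrow> nat list list" where
  "f0 k = (if k mod 4 = 0 then [H,H] else if k mod 4 = 1 then [H,Tr]
           else if k mod 4 = 2 then [Tr,Tr] else [Tr,H])"

lemma noFIP: "\<not> has_FIP 2 2 2 A0 mu0 c0"
  unfolding has_FIP_def
proof -
  have "\<forall>k. improvement_step 2 2 2 A0 mu0 c0 (f0 k) (f0 (Suc k))"
  proof
    fix k :: nat
    have "k mod 4 = 0 \<or> k mod 4 = 1 \<or> k mod 4 = 2 \<or> k mod 4 = 3" by auto
    moreover have "Suc k mod 4 = (if k mod 4 = 3 then 0 else Suc (k mod 4))"
      by (simp add: mod_Suc)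
    ultimately show "improvement_step 2 2 2 A0 mu0 c0 (f0 k) (f0 (Suc k))"
      unfolding f0_def using s1 s2 s3 s4 by auto
  qed
  then show "\<not> \<not> (\<exists>f :: nat \<Rightarrow> nat list list. \<forall>k. improvement_step 2 2 2 A0 mu0 c0 (f k) (f (Suc k)))"
    by blast
qed


lemma game: "ride_sharing_game 2 2 2 2 {0,1} E0 A0 mu0 c0"
  unfolding ride_sharing_game_def
proof (intro conjI)
  show "\<forall>i<2. A0 i \<subseteq> {r. is_route 2 {0, 1} E0 r}"
    by (auto simp: A0_def is_route_def E0_def)
  show "\<forall>a\<in>profiles 2 A0. \<forall>i<2. \<forall>t\<in>{1..<2}. mu0 i t a \<in> insert None (Some ` {..<2})"
    by (auto simp: mu0_def)
  show "\<forall>a\<in>profiles 2 A0. \<forall>i<2. \<forall>j<2. \<forall>t\<in>{1..<2}.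
        mu0 i t a \<noteq> None \<and> mu0 i t a = mu0 j t a \<longrightarrow> edge_at (a ! i) t = edge_at (a ! j) t"
  proof (intro ballI allI impI)
    fix a i j t assume "i < (2::nat)" "j < (2::nat)" "mu0 i t a \<noteq> None \<and> mu0 i t a = mu0 j t a"
    then have "i = j" by (auto simp: mu0_def split: if_splits)
    then show "edge_at (a ! i) t = edge_at (a ! j) t" by simp
  qed
qed (auto simp: E0_def c0_def)

theorem theorem2:
  shows "\<exists>(N::nat) (M::nat) (w::nat) (T::nat) (V::nat set) (E::(nat \<times> nat) set)
           (A::nat \<Rightarrow> nat list set) (\<mu>::nat \<Rightarrow> nat \<Rightarrow> nat list list \<Rightarrow> nat option)
           (c::nat \<times> nat \<Rightarrow> nat \<Rightarrow> nat \<Rightarrow> real).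
           ride_sharing_game N M w T V E A \<mu> c \<and> \<not> has_FIP N w T A \<mu> c"
  using game noFIP by blast

end
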